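(* Let $\Sigma,\Gamma$ be finite alphabets, $k>0$, $\tau$ a tier on $\Sigma\times\Gamma^*$, and $f:\Sigma^*\to\Gamma^*$ a function that is $k$-TSSL on tier $\tau$. Then the SFST $T_f$ constructed from $f$ as described in the context is onward.
   Context: Strings: $\lambda$ is the empty string; $\rtimes$ is a boundary symbol not in any alphabet. For $m\ge0$, $\mathrm{suff}^m(x)$ is the string of the last $m$ symbols of $\rtimes^mx$. $\mathrm{lcp}(A)$ is the longest common prefix of a set of strings $A$. SFST: $\langle Q,\Sigma,\Gamma,q_0,\to,\sigma\rangle$ with states $Q$, start $q_0$, transition function $\to:Q\times\Sigma\to Q\times\Gamma^*$, final output $\sigma:Q\to\Gamma^*$; $q\xrightarrow{a:y}r$ means $\to(q,a)=\langle r,y\rangle$. The SFST is onward if for every state $q\ne q_0$, $\mathrm{lcp}(\{y\mid\exists a\in\Sigma\,\exists r.\ q\xrightarrow{a:y}r\}\cup\{\sigma(q)\})=\lambda$. For $f:\Sigma^*\to\Gamma^*$: $f^{\gets}(x):=\mathrm{lcp}(\{f(xy)\mid y\in\Sigma^*\})$; $f^{\to}_x$ is defined by $f(xy)=f^{\gets}(x)f^{\to}_x(y)$. A tier on a (possibly infinite) alphabet $A$ is a homomorphism $\tau:A^*\to A^*$ with $\tau(a)\in\{a,\lambda\}$ for each $a$; extended to $\rtimes$ by $\tau(\rtimes)=\rtimes$. Actions: $\mathbb{A}_f:=\{\langle x,y\rangle\in\Sigma\times\Gamma^*\mid\exists z.\ f^{\gets}(zx)=f^{\gets}(z)y\}$,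 written $x:y$. Run: if $|x|\le1$, $f^{\Leftarrow}(x):=x:f^{\gets}(x)$; if $x=yz$, $|y|\ge1$, $|z|=1$, $f^{\Leftarrow}(x):=f^{\Leftarrow}(y)(z:w)$ where $f^{\gets}(x)=f^{\gets}(y)w$. $f$ is $k$-TSSL on $\tau$ if $\mathrm{suff}^{k-1}(\tau(f^{\Leftarrow}(x)))=\mathrm{suff}^{k-1}(\tau(f^{\Leftarrow}(y)))$ implies $f^{\to}_x=f^{\to}_y$ for all $x,y\in\Sigma^*$. Construction of $T_f$: $Q:=(\{\rtimes\}\cup\mathbb{A}_f)^{k-1}$, $q_0:=\rtimes^{k-1}$. For $x\in\Sigma$, $\to(q_0,x):=\langle \mathrm{suff}^{k-1}(\tau(x:f^{\gets}(x))),f^{\gets}(x)\rangle$. For $q\in Q\setminus\{q_0\}$ and $w\in\Sigma$: take $x\in\Sigma^*$ with $\mathrm{suff}^{k-1}(\tau(f^{\Leftarrow}(x)))=q$ and let $w:y\in\mathbb{A}_f$ be such that $f^{\gets}(xw)=f^{\gets}(x)y$; set $\to(q,w):=\langle\mathrm{suff}^{k-1}(\tau(q(w:y))),y\rangle$ (by the TSSL property this does not depend on the choice of $x$). Final outputs: $\sigma(q_0):=f(\lambda)$, and for $q\ne q_0$, $\sigma(q):=f^{\to}_x(\lambda)$ where $\mathrm{suff}^{k-1}(\tau(f^{\Leftarrow}(x)))=q$. *)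

theory Defs
  imports Main "HOL-Library.Sublist"
begin

text \<open>Strings over an alphabet are lists. The boundary symbol is modelled by None,
  ordinary symbols (actions) by Some. lcp is the library Longest_common_prefix.\<close>

abbreviation lcp :: "'a list set \<Rightarrow> 'a list" where
  "lcp A \<equiv> Longest_common_prefix A"

definition suff :: "nat \<Rightarrow> 'c option list \<Rightarrow> 'c option list" where
  "suff m xs = drop (length xs) (replicate m None @ xs)"

definition f_lar :: "('a list \<Rightarrow> 'b list) \<Rightarrow> 'a list \<Rightarrow> 'b list" where
  "f_lar f x = lcp {f (x @ y) | y. True}"

text \<open>f-right_x, determined by f(xy) = f_lar(x) f_to_x(y)\<close>
definition f_to :: "('a list \<Rightarrow> 'b list) \<Rightarrow> 'a list \<Rightarrow> 'a list \<Rightarrow> 'b list" where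
  "f_to f x y = drop (length (f_lar f x)) (f (x @ y))"

definition actions :: "('a list \<Rightarrow> 'b list) \<Rightarrow> ('a \<times> 'b list) set" where
  "actions f = {(a, y). \<exists>z. f_lar f (z @ [a]) = f_lar f z @ y}"

function run :: "('a list \<Rightarrow> 'b list) \<Rightarrow> 'a list \<Rightarrow> ('a \<times> 'b list) list" where
  "run f x = (if length x \<le> 1 then map (\<lambda>a. (a, f_lar f x)) x
     else run f (butlast x) @
          [(last x, drop (length (f_lar f (butlast x))) (f_lar f x))])"
  by auto
termination by (relation "measure (\<lambda>(f, x). length x)") auto

text \<open>A tier on the alphabet of actions is given by the predicate of kept symbols;
  it is extended to the boundary symbol (None), which is always kept.\<close>
definition tier :: "('c \<Rightarrow> bool) \<Rightarrow> 'c list \<Rightarrow> 'c list" where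
  "tier T xs = filter T xs"

definition tier_b :: "('c \<Rightarrow> bool) \<Rightarrow> 'c option list \<Rightarrow> 'c option list" where
  "tier_b T xs = filter (\<lambda>c. case c of None \<Rightarrow> True | Some a \<Rightarrow> T a) xs"

definition tstate :: "nat \<Rightarrow> (('a \<times> 'b list) \<Rightarrow> bool) \<Rightarrow> ('a list \<Rightarrow> 'b list)
    \<Rightarrow> 'a list \<Rightarrow> ('a \<times> 'b list) option list" where
  "tstate k T f x = suff (k - 1) (map Some (tier T (run f x)))"

definition TSSL :: "nat \<Rightarrow> (('a \<times> 'b list) \<Rightarrow> bool) \<Rightarrow> ('a list \<Rightarrow> 'b list) \<Rightarrow> bool" where
  "TSSL k T f \<longleftrightarrow> (\<forall>x y. tstate k T f x = tstate k T f y \<longrightarrow> f_to f x = f_to f y)"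

record ('q, 'a, 'b) sfst =
  states :: "'q set"
  start :: 'q
  trans :: "'q \<Rightarrow> 'a \<Rightarrow> 'q \<times> 'b list"
  final :: "'q \<Rightarrow> 'b list"

definition onward :: "('q, 'a, 'b) sfst \<Rightarrow> bool" where
  "onward M \<longleftrightarrow> (\<forall>q \<in> states M. q \<noteq> start M \<longrightarrow>
     lcp ({snd (trans M q a) | a. True} \<union> {final M q}) = [])"

text \<open>M is (a choice of) the transducer T_f built from f as in the construction.
  Whenever the construction says "take x with ...", the witness may be chosen
  arbitrarily (separately for each transition and each final output).\<close>
definition is_Tf :: "nat \<Rightarrow> (('a \<times> 'b list) \<Rightarrow> bool) \<Rightarrow> ('a list \<Rightarrow> 'b list)
    \<Rightarrow> (('a \<times> 'b list) option list, 'a, 'b) sfst \<Rightarrow> bool" where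
  "is_Tf k T f M \<longleftrightarrow>
     states M = {replicate (k - 1) None} \<union> {tstate k T f x | x. True} \<and>
     start M = replicate (k - 1) None \<and>
     (\<forall>a. trans M (start M) a =
        (suff (k - 1) (tier_b T [Some (a, f_lar f [a])]), f_lar f [a])) \<and>
     final M (start M) = f [] \<and>
     (\<forall>q \<in> states M. q \<noteq> start M \<longrightarrow>
        (\<forall>w. \<exists>x y. tstate k T f x = q \<and> (w, y) \<in> actions f \<and>
              f_lar f (x @ [w]) = f_lar f x @ y \<and>
              trans M q w = (suff (k - 1) (tier_b T (q @ [Some (w, y)])), y)) \<and>
        (\<exists>x. tstate k T f x = q \<and> final M q = f_to f x []))"

end

theory Submission
  imports Defs
begin

lemma lar_prefix: "prefix (f_lar f x) (f (x @ y))"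
  unfolding f_lar_def by (rule Longest_common_prefix_prefix) auto

lemma f_split: "f (x @ y) = f_lar f x @ f_to f x y"
  using lar_prefix[of f x y] unfolding f_to_def
  by (metis append_take_drop_id prefix_def take_all_iff append_eq_conv_conj)

lemma lcp_app: "A \<noteq> {} \<Longrightarrow> lcp ((@) p ` A) = p @ lcp A"
proof (induction p)
  case Nil then show ?case by simp
next
  case (Cons a p)
  have "(@) (a # p) ` A = (#) a ` ((@) p ` A)" by auto
  then show ?case using Cons Longest_common_prefix_image_Cons[of "(@) p ` A" a] by simp
qed

lemma lar_snoc: "f_lar f (x @ [w]) = f_lar f x @ lcp {f_to f x (w # y) | y. True}"
proof -
  have "{f (x @ [w] @ y) | y. True} = (@) (f_lar f x) ` {f_to f x (w # y) | y. True}"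
    using f_split[of f x] by auto
  then show ?thesis unfolding f_lar_def[of f "x @ [w]"]
    using lcp_app[of "{f_to f x (w # y) | y. True}" "f_lar f x"]
    by (simp add: f_lar_def) blast
qed

lemma lcp_to: "lcp {f_to f x y | y. True} = []"
proof -
  have "{f (x @ y) | y. True} = (@) (f_lar f x) ` {f_to f x y | y. True}"
    using f_split[of f x] by auto
  then have "f_lar f x = f_lar f x @ lcp {f_to f x y | y. True}"
    using lcp_app[of "{f_to f x y | y. True}" "f_lar f x"]
    by (simp add: f_lar_def) blast
  then show ?thesis by simp
qed

theorem corollary28:
  fixes f :: "'a::finite list \<Rightarrow> 'b::finite list"
    and T :: "('a \<times> 'b list) \<Rightarrow> bool"
    and k :: nat
    and M :: "(('a \<times> 'b list) option list, 'a, 'b) sfst"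
  assumes "k > 0"
    and "TSSL k T f"
    and "is_Tf k T f M"
  shows "onward M"
  unfolding onward_def
proof (intro ballI impI)
  fix q assume q: "q \<in> states M" "q \<noteq> start M"
  have tr: "\<forall>w. \<exists>x y. tstate k T f x = q \<and> (w, y) \<in> actions f \<and>
              f_lar f (x @ [w]) = f_lar f x @ y \<and>
              trans M q w = (suff (k - 1) (tier_b T (q @ [Some (w, y)])), y)"
    and "\<exists>x. tstate k T f x = q \<and> final M q = f_to f x []"
    using assms(3) q unfolding is_Tf_def by auto
  then obtain x0 where x0: "tstate k T f x0 = q" "final M q = f_to f x0 []" by blast
  let ?g = "f_to f x0"
  have sw: "snd (trans M q w) = lcp {?g (w # y) | y. True}" for w
  proof -
    obtain x y where xy: "tstate k T f x = q" "f_lar f (x @ [w]) = f_lar f x @ y"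
      "trans M q w = (suff (k - 1) (tier_b T (q @ [Some (w, y)])), y)"
      using tr by blast
    have "f_to f x = ?g" using assms(2) xy(1) x0(1) unfolding TSSL_def by metis
    with xy lar_snoc[of f x w] show ?thesis by simp
  qed
  let ?S = "{snd (trans M q a) | a. True} \<union> {final M q}"
  let ?p = "lcp ?S"
  have pref: "prefix ?p s" if "s \<in> ?S" for s
    using that by (rule Longest_common_prefix_prefix)
  have "prefix ?p (?g y)" for y
  proof (cases y)
    case Nil then show ?thesis using pref[of "final M q"] x0(2) by simp
  next
    case (Cons w y')
    have "prefix ?p (lcp {?g (w # y) | y. True})"
    proof -
      have "snd (trans M q w) \<in> ?S" by blast
      from pref[OF this] show ?thesis unfolding sw[of w] .
    qed
    moreover have "prefix (lcp {?g (w # y) | y. True}) (?g (w # y'))"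
      by (rule Longest_common_prefix_prefix) auto
    ultimately show ?thesis unfolding Cons by (rule prefix_order.trans)
  qed
  then have "prefix ?p (lcp {?g y | y. True})"
    by (intro Longest_common_prefix_max_prefix) auto
  then show "?p = []" using lcp_to[of f x0] by simp
qed

end
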